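(* Let $S$ be a $\delta$-accurate approximate subdivision and let $e[v,a],f[w,b]\in S$ with $e\prec_y f$, $a_x=b_x$ and $a_y>b_y$ (a violation of consistency constraint (2) at the right endpoints). Then ${\rm dist}(a,f)<\delta$ or ${\rm dist}(b,e)<\delta$.
   Context: Points $p\in\mathbb{R}^2$ have coordinates $(p_x,p_y)$. A curve is an open, bounded, piecewise-algebraic arc that is both $x$-monotone and $y$-monotone; a curve with endpoints $v,a$ where $v_x\le a_x$ is written $e[v,a]$. Sets $s,t$ overlap in $x$ if there exist $p\in s$, $q\in t$ with $p_x=q_x$. For sets $s,t$ that overlap in $x$, $s<_y t$ means $p_y<q_y$ for all $p\in s$, $q\in t$ with $p_x=q_x$. An approximate subdivision is a set $S$ of curves together with a binary relation $\prec_y$ on $S$ whose transitive closure is irreflexive, such that for $e,f\in S$: $e\prec_y f$ or $f\prec_y e$ holds iff $e$ and $f$ overlap in $x$. ${\rm dist}(a,e)=\inf_{q\in e}|a-q|$. A $\delta$-deformation of a curve $e$ is an $x$-monotone curve with the same endpoints as $e$ whose Hausdorff distance from $e$ is less than $\delta$. $S$ is $\delta$-accurate if whenever $e\prec_y f$, there exist $\delta$-deformations $\tilde e$ of $e$ and $\tilde f$ of $f$ with $\tilde e<_y\tilde f$. *)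

theory Defs
  imports "HOL-Analysis.Analysis"
begin

type_synonym pt = "real \<times> real"

text \<open>Bivariate real polynomials, given by a coefficient function with finite support.\<close>
definition bipoly :: "(nat \<times> nat \<Rightarrow> real) \<Rightarrow> pt \<Rightarrow> real" where
  "bipoly c p = (\<Sum>ij\<in>{ij. c ij \<noteq> 0}. c ij * fst p ^ fst ij * snd p ^ snd ij)"

definition nonzero_bipoly :: "(nat \<times> nat \<Rightarrow> real) \<Rightarrow> bool" where
  "nonzero_bipoly c \<longleftrightarrow> finite {ij. c ij \<noteq> 0} \<and> (\<exists>ij. c ij \<noteq> 0)"

definition piecewise_algebraic :: "(real \<Rightarrow> pt) \<Rightarrow> bool" where
  "piecewise_algebraic g \<longleftrightarrow>
     (\<exists>(n::nat) t. t 0 = 0 \<and> t n = 1 \<and> (\<forall>i<n. t i < t (Suc i)) \<and>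
        (\<forall>i<n. \<exists>c. nonzero_bipoly c \<and> (\<forall>s\<in>{t i..t (Suc i)}. bipoly c (g s) = 0)))"

definition coord_monotone :: "(pt \<Rightarrow> real) \<Rightarrow> (real \<Rightarrow> pt) \<Rightarrow> bool" where
  "coord_monotone h g \<longleftrightarrow>
     (\<forall>s t. 0 \<le> s \<and> s \<le> t \<and> t \<le> 1 \<longrightarrow> h (g s) \<le> h (g t)) \<or>
     (\<forall>s t. 0 \<le> s \<and> s \<le> t \<and> t \<le> 1 \<longrightarrow> h (g t) \<le> h (g s))"

definition xmono_open_arc :: "pt set \<Rightarrow> pt \<Rightarrow> pt \<Rightarrow> bool" where
  "xmono_open_arc e v a \<longleftrightarrow>
     (\<exists>g. arc g \<and> pathstart g = v \<and> pathfinish g = a \<and> e = g ` {0<..<1} \<and>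
          coord_monotone fst g)"

definition curve :: "pt set \<Rightarrow> pt \<Rightarrow> pt \<Rightarrow> bool" where
  "curve e v a \<longleftrightarrow> fst v \<le> fst a \<and> bounded e \<and>
     (\<exists>g. arc g \<and> pathstart g = v \<and> pathfinish g = a \<and> e = g ` {0<..<1} \<and>
          coord_monotone fst g \<and> coord_monotone snd g \<and> piecewise_algebraic g)"

definition overlap_x :: "pt set \<Rightarrow> pt set \<Rightarrow> bool" where
  "overlap_x s t \<longleftrightarrow> (\<exists>p\<in>s. \<exists>q\<in>t. fst p = fst q)"

definition below_y :: "pt set \<Rightarrow> pt set \<Rightarrow> bool" where
  "below_y s t \<longleftrightarrow> overlap_x s t \<and> (\<forall>p\<in>s. \<forall>q\<in>t. fst p = fst q \<longrightarrow> snd p < snd q)"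

definition approx_subdivision :: "pt set set \<Rightarrow> (pt set \<times> pt set) set \<Rightarrow> bool" where
  "approx_subdivision S R \<longleftrightarrow>
     (\<forall>e\<in>S. \<exists>v a. curve e v a) \<and> R \<subseteq> S \<times> S \<and> irrefl (R\<^sup>+) \<and>
     (\<forall>e\<in>S. \<forall>f\<in>S. e \<noteq> f \<longrightarrow> (((e, f) \<in> R \<or> (f, e) \<in> R) \<longleftrightarrow> overlap_x e f))"

definition hausdorff_dist :: "pt set \<Rightarrow> pt set \<Rightarrow> real" where
  "hausdorff_dist A B = max (SUP p\<in>A. infdist p B) (SUP q\<in>B. infdist q A)"

definition deformation :: "real \<Rightarrow> pt set \<Rightarrow> pt set \<Rightarrow> bool" where
  "deformation \<delta> e e' \<longleftrightarrow>
     (\<exists>v a. curve e v a \<and> xmono_open_arc e' v a) \<and> hausdorff_dist e' e < \<delta>"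

definition delta_accurate :: "real \<Rightarrow> pt set set \<Rightarrow> (pt set \<times> pt set) set \<Rightarrow> bool" where
  "delta_accurate \<delta> S R \<longleftrightarrow>
     (\<forall>e f. (e, f) \<in> R \<longrightarrow>
        (\<exists>e' f'. deformation \<delta> e e' \<and> deformation \<delta> f f' \<and> below_y e' f'))"

end

theory Submission
  imports Defs
begin

lemma endpoints:
  fixes g :: "real \<Rightarrow> pt"
  assumes "arc g"
  shows "closure (g ` {0<..<1}) - g ` {0<..<1} = {g 0, g 1}"
proof -
  have c: "continuous_on {0..1} g" using assms by (simp add: arc_def path_def)
  have inj: "inj_on g {0..1}" using assms by (simp add: arc_def)
  have cl: "closure (g ` {0<..<1}) = g ` {0..1}"
  proof
    have "compact (g ` {0..1})" using c by (intro compact_continuous_image) auto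
    hence "closed (g ` {0..1})" by (metis compact_imp_closed)
    thus "closure (g ` {0<..<1}) \<subseteq> g ` {0..1}"
      by (intro closure_minimal) auto
  next
    show "g ` {0..1} \<subseteq> closure (g ` {0<..<1})"
      using image_closure_subset[of "{0<..<1::real}" g "closure (g ` {0<..<1})"] c
      by (simp add: closure_greaterThanLessThan closure_subset)
  qed
  have "g ` {0..1} - g ` {0<..<1} = {g 0, g 1}"
  proof
    show "g ` {0..1} - g ` {0<..<1} \<subseteq> {g 0, g 1}"
    proof
      fix p assume "p \<in> g ` {0..1} - g ` {0<..<1}"
      then obtain s where "s \<in> {0..1}" "p = g s" "p \<notin> g ` {0<..<1}" by auto
      hence "s \<notin> {0<..<1}" by blast
      hence "s = 0 \<or> s = 1" using \<open>s \<in> {0..1}\<close> by auto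
      thus "p \<in> {g 0, g 1}" using \<open>p = g s\<close> by auto
    qed
  next
    show "{g 0, g 1} \<subseteq> g ` {0..1} - g ` {0<..<1}"
    proof
      fix p assume p: "p \<in> {g 0, g 1}"
      then obtain s where s: "s \<in> {0,1::real}" "p = g s" by auto
      have "p \<notin> g ` {0<..<1}"
      proof
        assume "p \<in> g ` {0<..<1}"
        then obtain t where t: "t \<in> {0<..<1}" "p = g t" by auto
        have "s = t" using inj_onD[OF inj, of s t] s t by auto
        thus False using s t by auto
      qed
      thus "p \<in> g ` {0..1} - g ` {0<..<1}" using s by auto
    qed
  qed
  thus ?thesis using cl by simp
qed

lemma curve_ends:
  assumes "curve e v a" "curve e v2 a2"
  shows "{v2, a2} = {v, a}"
proof -
  obtain g where g: "arc g" "pathstart g = v" "pathfinish g = a" "e = g ` {0<..<1}"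
    using assms(1) unfolding curve_def by blast
  obtain g2 where g2: "arc g2" "pathstart g2 = v2" "pathfinish g2 = a2" "e = g2 ` {0<..<1}"
    using assms(2) unfolding curve_def by blast
  have "closure e - e = {v, a}" using endpoints[OF g(1)] g by (simp add: pathstart_def pathfinish_def)
  moreover have "closure e - e = {v2, a2}" using endpoints[OF g2(1)] g2 by (simp add: pathstart_def pathfinish_def)
  ultimately show ?thesis by simp
qed

lemma mono_bound:
  assumes "coord_monotone fst g" "fst (g 0) \<le> X" "fst (g 1) \<le> X" "s \<in> {0..1}"
  shows "fst (g s) \<le> X"
  using assms unfolding coord_monotone_def
  by (metis atLeastAtMost_iff order_refl order_trans)

lemma infdist_bound:
  assumes "arc h" "e' = h ` {0<..<1}" "hausdorff_dist e' e < \<delta>" "p \<in> e'"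
  shows "infdist p e < \<delta>"
proof -
  have c: "continuous_on {0..1} h" using assms(1) by (simp add: arc_def path_def)
  have "compact ((\<lambda>q. infdist q e) ` (h ` {0..1}))"
    by (intro compact_continuous_image continuous_on_infdist continuous_on_id)
       (use c compact_continuous_image in auto)
  hence "bdd_above ((\<lambda>q. infdist q e) ` (h ` {0..1}))"
    by (intro bounded_imp_bdd_above compact_imp_bounded)
  hence bdd: "bdd_above ((\<lambda>q. infdist q e) ` e')"
    by (rule bdd_above_mono) (use assms(2) in auto)
  have "infdist p e \<le> (SUP q\<in>e'. infdist q e)" by (rule cSUP_upper[OF assms(4) bdd])
  also have "\<dots> \<le> hausdorff_dist e' e" unfolding hausdorff_dist_def by simp
  finally show ?thesis using assms(3) by simp
qed

lemma deform_arc: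
  assumes "curve e v a" "deformation \<delta> e e'"
  shows "\<exists>h. arc h \<and> h 1 = a \<and> e' = h ` {0<..<1} \<and> (\<forall>s\<in>{0..1}. fst (h s) \<le> fst a)
     \<and> coord_monotone fst h \<and> (\<forall>p\<in>e'. infdist p e < \<delta>)"
proof -
  obtain v2 a2 where c2: "curve e v2 a2" and x: "xmono_open_arc e' v2 a2"
    and hd: "hausdorff_dist e' e < \<delta>"
    using assms(2) unfolding deformation_def by blast
  obtain h0 where h0: "arc h0" "h0 0 = v2" "h0 1 = a2" "e' = h0 ` {0<..<1}" "coord_monotone fst h0"
    using x unfolding xmono_open_arc_def pathstart_def pathfinish_def by blast
  have ends: "{v2, a2} = {v, a}" by (rule curve_ends[OF assms(1) c2])
  have ne: "v2 \<noteq> a2" using arc_distinct_ends[OF h0(1)] h0 by (auto simp: pathstart_def pathfinish_def)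
  have va: "fst v \<le> fst a" using assms(1) unfolding curve_def by simp
  have va2: "fst v2 \<le> fst a2" using c2 unfolding curve_def by simp
  have inf: "\<forall>p\<in>e'. infdist p e < \<delta>" using infdist_bound[OF h0(1) h0(4) hd] by blast
  show ?thesis
  proof (cases "a2 = a")
    case True
    hence "v2 = v" using ends ne by (metis doubleton_eq_iff)
    have "\<forall>s\<in>{0..1}. fst (h0 s) \<le> fst a"
      using mono_bound[OF h0(5)] h0 True \<open>v2 = v\<close> va by auto
    thus ?thesis using h0 True inf by blast
  next
    case False
    hence "a2 = v" "v2 = a" using ends ne by (metis doubleton_eq_iff)+
    define h where "h = reversepath h0"
    have arc: "arc h" unfolding h_def by (rule arc_reversepath[OF h0(1)])
    have h1: "h 1 = a" using h0 \<open>v2 = a\<close> by (simp add: h_def reversepath_def)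
    have img: "(\<lambda>s. 1 - s) ` {0<..<1::real} = {0<..<1}"
    proof
      show "(\<lambda>s. 1 - s) ` {0<..<1::real} \<subseteq> {0<..<1}" by auto
      show "{0<..<1} \<subseteq> (\<lambda>s. 1 - s) ` {0<..<1::real}"
      proof
        fix x :: real assume "x \<in> {0<..<1}"
        hence "1 - x \<in> {0<..<1}" "x = 1 - (1 - x)" by auto
        thus "x \<in> (\<lambda>s. 1 - s) ` {0<..<1}" by blast
      qed
    qed
    have "h ` {0<..<1} = h0 ` ((\<lambda>s. 1 - s) ` {0<..<1})"
      unfolding h_def reversepath_def image_image by simp
    hence im: "e' = h ` {0<..<1}" using img h0(4) by simp
    have cm: "coord_monotone fst h"
      using h0(5) unfolding coord_monotone_def h_def reversepath_def
      by (smt (verit))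
    have "\<forall>s\<in>{0..1}. fst (h s) \<le> fst a"
    proof
      fix s :: real assume s: "s \<in> {0..1}"
      have "fst (h 0) \<le> fst a" "fst (h 1) \<le> fst a"
        using h0 \<open>a2 = v\<close> \<open>v2 = a\<close> va by (auto simp: h_def reversepath_def)
      thus "fst (h s) \<le> fst a" using mono_bound[OF cm _ _ s] by blast
    qed
    thus ?thesis using arc h1 im cm inf by blast
  qed
qed

lemma first_hit:
  fixes h :: "real \<Rightarrow> pt"
  assumes "arc h" "fst (h 1) = X" "\<forall>s\<in>{0..1}. fst (h s) \<le> X" "coord_monotone fst h"
  shows "\<exists>\<alpha>\<in>{0..1}. (\<forall>s. 0 \<le> s \<and> s < \<alpha> \<longrightarrow> fst (h s) < X)
            \<and> (\<forall>s. \<alpha> \<le> s \<and> s \<le> 1 \<longrightarrow> fst (h s) = X)"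
proof -
  have c: "continuous_on {0..1} h" using assms(1) by (simp add: arc_def path_def)
  hence cf: "continuous_on {0..1} (\<lambda>s. fst (h s))" by (intro continuous_intros)
  define T where "T = {s \<in> {0..1}. fst (h s) = X}"
  have cl: "closed T" unfolding T_def by (rule continuous_closed_preimage_constant[OF cf]) auto
  have ne: "T \<noteq> {}" using assms(2) unfolding T_def by auto
  have bb: "bdd_below T" unfolding T_def by (rule bdd_belowI[of _ 0]) auto
  define \<alpha> where "\<alpha> = Inf T"
  have aT: "\<alpha> \<in> T" unfolding \<alpha>_def by (rule closed_contains_Inf[OF ne bb cl])
  have "\<forall>s. 0 \<le> s \<and> s < \<alpha> \<longrightarrow> fst (h s) < X"
  proof (intro allI impI)
    fix s assume s: "0 \<le> s \<and> s < \<alpha>"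
    have "s \<notin> T"
    proof
      assume "s \<in> T"
      hence "\<alpha> \<le> s" unfolding \<alpha>_def by (rule cInf_lower[OF _ bb])
      thus False using s by simp
    qed
    moreover have "s \<in> {0..1}" using s aT unfolding T_def by auto
    ultimately show "fst (h s) < X" using assms(3) unfolding T_def by force
  qed
  moreover have "\<forall>s. \<alpha> \<le> s \<and> s \<le> 1 \<longrightarrow> fst (h s) = X"
  proof (intro allI impI)
    fix s assume s: "\<alpha> \<le> s \<and> s \<le> 1"
    have a0: "0 \<le> \<alpha>" "fst (h \<alpha>) = X" using aT unfolding T_def by auto
    have le: "fst (h s) \<le> X" using assms(3) s a0 by auto
    from assms(4) show "fst (h s) = X"
      unfolding coord_monotone_def
    proof
      assume "\<forall>s t. 0 \<le> s \<and> s \<le> t \<and> t \<le> 1 \<longrightarrow> fst (h s) \<le> fst (h t)"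
      hence "fst (h \<alpha>) \<le> fst (h s)" using s a0 by blast
      thus ?thesis using le a0 by simp
    next
      assume "\<forall>s t. 0 \<le> s \<and> s \<le> t \<and> t \<le> 1 \<longrightarrow> fst (h t) \<le> fst (h s)"
      hence "fst (h 1) \<le> fst (h s)" using s a0 by auto
      thus ?thesis using le assms(2) by simp
    qed
  qed
  ultimately show ?thesis using aT unfolding T_def by blast
qed

lemma cont_snd:
  fixes h :: "real \<Rightarrow> pt"
  assumes "arc h" "\<alpha> \<in> {0..1}" "\<epsilon> > 0"
  shows "\<exists>\<eta>>0. \<forall>s\<in>{0..1}. \<bar>s - \<alpha>\<bar> < \<eta> \<longrightarrow> \<bar>snd (h s) - snd (h \<alpha>)\<bar> < \<epsilon>"
proof -
  have c: "continuous_on {0..1} h" using assms(1) by (simp add: arc_def path_def)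
  then obtain \<eta> where "\<eta> > 0" "\<forall>s\<in>{0..1}. dist s \<alpha> < \<eta> \<longrightarrow> dist (h s) (h \<alpha>) < \<epsilon>"
    using assms(2,3) unfolding continuous_on_iff by blast
  moreover have "\<And>s. \<bar>snd (h s) - snd (h \<alpha>)\<bar> \<le> dist (h s) (h \<alpha>)"
    using dist_snd_le by (metis dist_real_def)
  ultimately show ?thesis unfolding dist_real_def by (meson le_less_trans)
qed

lemma lemL:
  fixes h k :: "real \<Rightarrow> pt"
  assumes "arc h" "arc k" "below_y (h`{0<..<1}) (k`{0<..<1})"
    "0 < \<alpha>" "\<alpha> \<le> 1" "0 < \<beta>" "\<beta> \<le> 1"
    "\<forall>s. 0 \<le> s \<and> s < \<alpha> \<longrightarrow> fst (h s) < X" "fst (h \<alpha>) = X"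
    "\<forall>s. 0 \<le> s \<and> s < \<beta> \<longrightarrow> fst (k s) < X" "fst (k \<beta>) = X"
  shows "snd (h \<alpha>) \<le> snd (k \<beta>)"
proof (rule ccontr)
  assume neg: "\<not> ?thesis"
  define \<epsilon> where "\<epsilon> = (snd (h \<alpha>) - snd (k \<beta>)) / 2"
  have ep: "\<epsilon> > 0" using neg unfolding \<epsilon>_def by simp
  obtain \<eta>1 where e1: "\<eta>1 > 0" "\<forall>s\<in>{0..1}. \<bar>s - \<alpha>\<bar> < \<eta>1 \<longrightarrow> \<bar>snd (h s) - snd (h \<alpha>)\<bar> < \<epsilon>"
    using cont_snd[OF assms(1) _ ep, of \<alpha>] assms by auto
  obtain \<eta>2 where e2: "\<eta>2 > 0" "\<forall>s\<in>{0..1}. \<bar>s - \<beta>\<bar> < \<eta>2 \<longrightarrow> \<bar>snd (k s) - snd (k \<beta>)\<bar> < \<epsilon>"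
    using cont_snd[OF assms(2) _ ep, of \<beta>] assms by auto
  define s1 where "s1 = max (\<alpha>/2) (\<alpha> - \<eta>1/2)"
  define t1 where "t1 = max (\<beta>/2) (\<beta> - \<eta>2/2)"
  have s1: "0 < s1" "s1 < \<alpha>" using assms(4) e1(1) unfolding s1_def by auto
  have t1: "0 < t1" "t1 < \<beta>" using assms(6) e2(1) unfolding t1_def by auto
  define x where "x = max (fst (h s1)) (fst (k t1))"
  have xX: "x < X" using assms(8,10) s1 t1 unfolding x_def by auto
  have ch: "continuous_on {s1..\<alpha>} (\<lambda>s. fst (h s))"
    using assms(1) s1 assms(5) unfolding arc_def path_def
    by (intro continuous_intros) (auto elim: continuous_on_subset)
  have ck: "continuous_on {t1..\<beta>} (\<lambda>s. fst (k s))"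
    using assms(2) t1 assms(7) unfolding arc_def path_def
    by (intro continuous_intros) (auto elim: continuous_on_subset)
  obtain s where s: "s1 \<le> s" "s \<le> \<alpha>" "fst (h s) = x"
    using IVT'[of "\<lambda>s. fst (h s)" s1 x \<alpha>, OF _ _ _ ch] s1 xX assms(9) unfolding x_def by auto
  obtain t where t: "t1 \<le> t" "t \<le> \<beta>" "fst (k t) = x"
    using IVT'[of "\<lambda>s. fst (k s)" t1 x \<beta>, OF _ _ _ ck] t1 xX assms(11) unfolding x_def by auto
  have "s \<noteq> \<alpha>" using s xX assms(9) by auto
  have "t \<noteq> \<beta>" using t xX assms(11) by auto
  have sin: "s \<in> {0<..<1}" using s s1 \<open>s \<noteq> \<alpha>\<close> assms(5) by auto
  have tin: "t \<in> {0<..<1}" using t t1 \<open>t \<noteq> \<beta>\<close> assms(7) by auto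
  have "s1 \<ge> \<alpha> - \<eta>1/2" unfolding s1_def by simp
  hence "\<bar>s - \<alpha>\<bar> < \<eta>1" using s e1(1) by linarith
  hence "\<bar>snd (h s) - snd (h \<alpha>)\<bar> < \<epsilon>"
    using e1(2) sin by auto
  moreover have "t1 \<ge> \<beta> - \<eta>2/2" unfolding t1_def by simp
  hence "\<bar>t - \<beta>\<bar> < \<eta>2" using t e2(1) by linarith
  hence "\<bar>snd (k t) - snd (k \<beta>)\<bar> < \<epsilon>"
    using e2(2) tin by auto
  moreover have "snd (h s) < snd (k t)"
    using assms(3) sin tin s(3) t(3) unfolding below_y_def by auto
  ultimately show False unfolding \<epsilon>_def abs_less_iff by (simp add: field_simps)
qed

lemma lemV:
  fixes h k :: "real \<Rightarrow> pt"
  assumes "arc h" "arc k" "below_y (h`{0<..<1}) (k`{0<..<1})"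
    "0 \<le> \<alpha>" "\<alpha> < 1" "0 \<le> \<beta>" "\<beta> < 1"
    "\<forall>s. \<alpha> \<le> s \<and> s \<le> 1 \<longrightarrow> fst (h s) = X"
    "\<forall>s. \<beta> \<le> s \<and> s \<le> 1 \<longrightarrow> fst (k s) = X"
  shows "snd (h 1) \<le> snd (k 1)"
proof (rule ccontr)
  assume neg: "\<not> ?thesis"
  define \<epsilon> where "\<epsilon> = (snd (h 1) - snd (k 1)) / 2"
  have ep: "\<epsilon> > 0" using neg unfolding \<epsilon>_def by simp
  obtain \<eta>1 where e1: "\<eta>1 > 0" "\<forall>s\<in>{0..1}. \<bar>s - 1\<bar> < \<eta>1 \<longrightarrow> \<bar>snd (h s) - snd (h 1)\<bar> < \<epsilon>"
    using cont_snd[OF assms(1) _ ep, of 1] by auto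
  obtain \<eta>2 where e2: "\<eta>2 > 0" "\<forall>s\<in>{0..1}. \<bar>s - 1\<bar> < \<eta>2 \<longrightarrow> \<bar>snd (k s) - snd (k 1)\<bar> < \<epsilon>"
    using cont_snd[OF assms(2) _ ep, of 1] by auto
  define s where "s = max ((\<alpha>+1)/2) (1 - \<eta>1/2)"
  define t where "t = max ((\<beta>+1)/2) (1 - \<eta>2/2)"
  have sin: "s \<in> {0<..<1}" "\<alpha> \<le> s" using assms(4,5) e1(1) unfolding s_def by (auto simp: max_def)
  have tin: "t \<in> {0<..<1}" "\<beta> \<le> t" using assms(6,7) e2(1) unfolding t_def by (auto simp: max_def)
  have "s \<ge> 1 - \<eta>1/2" unfolding s_def by simp
  hence "\<bar>s - 1\<bar> < \<eta>1" using sin e1(1) by auto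
  hence "\<bar>snd (h s) - snd (h 1)\<bar> < \<epsilon>" using e1 sin by auto
  moreover have "t \<ge> 1 - \<eta>2/2" unfolding t_def by simp
  hence "\<bar>t - 1\<bar> < \<eta>2" using tin e2(1) by auto
  hence "\<bar>snd (k t) - snd (k 1)\<bar> < \<epsilon>" using e2 tin by auto
  moreover have "fst (h s) = fst (k t)" using assms(8,9) sin tin by auto
  hence "snd (h s) < snd (k t)"
    using assms(3) sin tin unfolding below_y_def by auto
  ultimately show False unfolding \<epsilon>_def abs_less_iff by (simp add: field_simps)
qed

lemma geom:
  fixes h k :: "real \<Rightarrow> pt"
  assumes "arc h" "arc k" "h 1 = a" "k 1 = b" "fst a = X" "fst b = X"
    "\<forall>s\<in>{0..1}. fst (h s) \<le> X" "\<forall>s\<in>{0..1}. fst (k s) \<le> X"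
    "coord_monotone fst h" "coord_monotone fst k"
    "below_y (h`{0<..<1}) (k`{0<..<1})" "snd a > snd b"
  shows "a \<in> k`{0<..<1} \<or> b \<in> h`{0<..<1}"
proof -
  obtain \<alpha> where al: "\<alpha> \<in> {0..1}" "\<forall>s. 0 \<le> s \<and> s < \<alpha> \<longrightarrow> fst (h s) < X"
      "\<forall>s. \<alpha> \<le> s \<and> s \<le> 1 \<longrightarrow> fst (h s) = X"
    using first_hit[OF assms(1) _ assms(7,9)] assms(3,5) by blast
  obtain \<beta> where be: "\<beta> \<in> {0..1}" "\<forall>s. 0 \<le> s \<and> s < \<beta> \<longrightarrow> fst (k s) < X"
      "\<forall>s. \<beta> \<le> s \<and> s \<le> 1 \<longrightarrow> fst (k s) = X"
    using first_hit[OF assms(2) _ assms(8,10)] assms(4,6) by blast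
  obtain s0 t0 where st: "s0 \<in> {0<..<1}" "t0 \<in> {0<..<1}" "fst (h s0) = fst (k t0)"
    using assms(11) unfolding below_y_def overlap_x_def by blast
  have fa: "fst (h \<alpha>) = X" using al by auto
  have fb: "fst (k \<beta>) = X" using be by auto
  have ch: "continuous_on {0..1} h" using assms(1) by (simp add: arc_def path_def)
  have ck: "continuous_on {0..1} k" using assms(2) by (simp add: arc_def path_def)
  consider "\<alpha> < 1 \<and> \<beta> < 1" | "\<alpha> = 1" | "\<alpha> < 1 \<and> \<beta> = 1" using al be by force
  thus ?thesis
  proof cases
    case 1
    have "snd (h 1) \<le> snd (k 1)"
      by (rule lemV[OF assms(1,2,11), of \<alpha> \<beta> X]) (use 1 al be in auto)
    thus ?thesis using assms by simp
  next
    case 2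
    have "fst (h s0) < X" using al(2) st(1) 2 by auto
    hence "fst (k t0) < X" using st by simp
    hence "t0 < \<beta>" using be(3) st(2) by (metis greaterThanLessThan_iff less_irrefl linorder_not_le less_imp_le)
    hence b0: "0 < \<beta>" using st by simp
    have le: "snd (h 1) \<le> snd (k \<beta>)"
      by (rule lemL[OF assms(1,2,11), of 1 \<beta> X]) (use 2 al be b0 fa fb in auto)
    have "\<beta> \<noteq> 1" using le assms by auto
    hence b1: "\<beta> < 1" using be by auto
    have cks: "continuous_on {\<beta>..1} (\<lambda>t. - snd (k t))"
      using ck be by (intro continuous_intros) (auto elim: continuous_on_subset)
    obtain t where t: "\<beta> \<le> t" "t \<le> 1" "- snd (k t) = - snd a"
      using IVT'[of "\<lambda>t. - snd (k t)" \<beta> "- snd a" 1, OF _ _ _ cks] le assms b1 by auto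
    have "fst (k t) = X" using be(3) t by auto
    hence kt: "k t = a" using t assms(5) by (simp add: prod_eq_iff)
    have "t \<noteq> 1" using kt assms by auto
    hence "t \<in> {0<..<1}" using t b0 by auto
    thus ?thesis using kt by blast
  next
    case 3
    have "fst (k t0) < X" using be(2) st(2) 3 by auto
    hence "fst (h s0) < X" using st by simp
    hence "s0 < \<alpha>" using al(3) st(1) by (metis greaterThanLessThan_iff less_irrefl linorder_not_le less_imp_le)
    hence a0: "0 < \<alpha>" using st by simp
    have le: "snd (h \<alpha>) \<le> snd (k 1)"
      by (rule lemL[OF assms(1,2,11), of \<alpha> 1 X]) (use 3 al be a0 fa fb in auto)
    have chs: "continuous_on {\<alpha>..1} (\<lambda>t. snd (h t))"
      using ch al by (intro continuous_intros) (auto elim: continuous_on_subset)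
    obtain s where s: "\<alpha> \<le> s" "s \<le> 1" "snd (h s) = snd b"
      using IVT'[of "\<lambda>t. snd (h t)" \<alpha> "snd b" 1, OF _ _ _ chs] le assms 3 by auto
    have "fst (h s) = X" using al(3) s by auto
    hence hs: "h s = b" using s assms(6) by (simp add: prod_eq_iff)
    have "s \<noteq> 1" using hs assms by auto
    hence "s \<in> {0<..<1}" using s a0 by auto
    thus ?thesis using hs by blast
  qed
qed

theorem lemma16:
  fixes S :: "pt set set" and R :: "(pt set \<times> pt set) set" and \<delta> :: real
    and e f :: "pt set" and v a w b :: pt
  assumes "approx_subdivision S R"
    and "delta_accurate \<delta> S R"
    and "e \<in> S" and "f \<in> S"
    and "curve e v a" and "curve f w b"
    and "(e, f) \<in> R"
    and "fst a = fst b" and "snd a > snd b"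
  shows "infdist a f < \<delta> \<or> infdist b e < \<delta>"
proof -
  obtain e' f' where d: "deformation \<delta> e e'" "deformation \<delta> f f'" "below_y e' f'"
    using assms(2,7) unfolding delta_accurate_def by blast
  obtain h where h: "arc h" "h 1 = a" "e' = h ` {0<..<1}" "\<forall>s\<in>{0..1}. fst (h s) \<le> fst a"
     "coord_monotone fst h" "\<forall>p\<in>e'. infdist p e < \<delta>"
    using deform_arc[OF assms(5) d(1)] by blast
  obtain k where k: "arc k" "k 1 = b" "f' = k ` {0<..<1}" "\<forall>s\<in>{0..1}. fst (k s) \<le> fst b"
     "coord_monotone fst k" "\<forall>p\<in>f'. infdist p f < \<delta>"
    using deform_arc[OF assms(6) d(2)] by blast
  have "a \<in> k`{0<..<1} \<or> b \<in> h`{0<..<1}"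
    by (rule geom[OF h(1) k(1) h(2) k(2) refl assms(8)[symmetric]])
       (use h k d(3) assms(8,9) in auto)
  thus ?thesis using h k by auto
qed

end
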